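(* There is no computable enumeration without repetitions $(\psi_x)_{x\in\omega}$ of all unary partial computable functions such that the partial applicative structure $(\omega,\cdot)$ with $n\cdot m\simeq\psi_n(m)$ is a partial combinatory algebra (equivalently, contains elements $k,s$ with $kab=a$, $sab\downarrow$ and $sabc\simeq ac(bc)$ for all $a,b,c\in\omega$).
   Context: A partial applicative structure is a set with a partial binary application $ab$, left associative and strict; $\simeq$ means both sides undefined or both defined and equal. It is a partial combinatory algebra if for every term $t(x_1,\dots,x_n,x)$ there is $b$ with $ba_1\cdots a_n\downarrow$ and $ba_1\cdots a_na\simeq t(a_1,\dots,a_n,a)$ for all $a_i,a$; this is equivalent to the existence of $k,s$ as in the claim. A computable enumeration means $(x,y)\mapsto\psi_x(y)$ is partial computable; without repetitions means each unary partial computable function occurs exactly once. *)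

theory Defs
  imports Main
begin

datatype recf = Z | S | Proj nat | Comp recf "recf list" | Prim recf recf | Mn recf

inductive eval :: "recf \<Rightarrow> nat list \<Rightarrow> nat \<Rightarrow> bool" where
  ev_Z: "eval Z xs 0"
| ev_S: "eval S (x # xs) (Suc x)"
| ev_Proj: "i < length xs \<Longrightarrow> eval (Proj i) xs (xs ! i)"
| ev_Comp: "list_all2 (\<lambda>g y. eval g xs y) gs ys \<Longrightarrow> eval f ys z \<Longrightarrow> eval (Comp f gs) xs z"
| ev_Prim0: "eval f xs y \<Longrightarrow> eval (Prim f g) (0 # xs) y"
| ev_PrimS: "eval (Prim f g) (n # xs) y \<Longrightarrow> eval g (n # y # xs) z \<Longrightarrow> eval (Prim f g) (Suc n # xs) z"
| ev_Mn: "eval f (n # xs) 0 \<Longrightarrow> (\<forall>m<n. \<exists>y. eval f (m # xs) (Suc y)) \<Longrightarrow> eval (Mn f) xs n"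
monos list_all2_mono

definition partial_computable1 :: "(nat \<Rightarrow> nat option) \<Rightarrow> bool" where
  "partial_computable1 f \<longleftrightarrow> (\<exists>c. \<forall>x y. f x = Some y \<longleftrightarrow> eval c [x] y)"

definition partial_computable2 :: "(nat \<Rightarrow> nat \<Rightarrow> nat option) \<Rightarrow> bool" where
  "partial_computable2 f \<longleftrightarrow> (\<exists>c. \<forall>x y z. f x y = Some z \<longleftrightarrow> eval c [x, y] z)"

definition computable_enum_norep :: "(nat \<Rightarrow> nat \<Rightarrow> nat option) \<Rightarrow> bool" where
  "computable_enum_norep \<psi> \<longleftrightarrow>
     partial_computable2 \<psi> \<and>
     (\<forall>x. partial_computable1 (\<psi> x)) \<and>
     (\<forall>f. partial_computable1 f \<longrightarrow> (\<exists>!x. \<psi> x = f))"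

definition app :: "(nat \<Rightarrow> nat \<Rightarrow> nat option) \<Rightarrow> nat option \<Rightarrow> nat option \<Rightarrow> nat option" where
  "app \<psi> u v = (case u of None \<Rightarrow> None | Some a \<Rightarrow> (case v of None \<Rightarrow> None | Some b \<Rightarrow> \<psi> a b))"

definition is_pca :: "(nat \<Rightarrow> nat \<Rightarrow> nat option) \<Rightarrow> bool" where
  "is_pca \<psi> \<longleftrightarrow> (\<exists>k s.
     (\<forall>a b. app \<psi> (app \<psi> (Some k) (Some a)) (Some b) = Some a) \<and>
     (\<forall>a b. app \<psi> (app \<psi> (Some s) (Some a)) (Some b) \<noteq> None) \<and>
     (\<forall>a b c. app \<psi> (app \<psi> (app \<psi> (Some s) (Some a)) (Some b)) (Some c)
              = app \<psi> (app \<psi> (Some a) (Some c)) (app \<psi> (Some b) (Some c))))"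

end

theory Submission
  imports Defs
begin

lemma suc_pc: "partial_computable1 (\<lambda>x. Some (Suc x))"
  unfolding partial_computable1_def
proof (intro exI allI)
  fix x y
  show "(Some (Suc x) = Some y) = eval S [x] y"
    by (auto intro: ev_S elim: eval.cases)
qed

definition realizes :: "(nat \<Rightarrow> nat \<Rightarrow> nat option) \<Rightarrow> nat \<Rightarrow> (nat \<Rightarrow> nat) \<Rightarrow> bool" where
  "realizes \<psi> e F \<longleftrightarrow> (\<forall>w. \<psi> e w = Some (F w))"

theorem mainTheorem9:
  shows "\<not> (\<exists>\<psi>. computable_enum_norep \<psi> \<and> is_pca \<psi>)"
proof
  assume "\<exists>\<psi>. computable_enum_norep \<psi> \<and> is_pca \<psi>"
  then obtain \<psi> where en: "computable_enum_norep \<psi>" and pca: "is_pca \<psi>" by blast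
  from pca obtain k s where
    hk: "\<forall>a b. app \<psi> (app \<psi> (Some k) (Some a)) (Some b) = Some a" and
    hs1: "\<forall>a b. app \<psi> (app \<psi> (Some s) (Some a)) (Some b) \<noteq> None" and
    hs2: "\<forall>a b c. app \<psi> (app \<psi> (app \<psi> (Some s) (Some a)) (Some b)) (Some c)
              = app \<psi> (app \<psi> (Some a) (Some c)) (app \<psi> (Some b) (Some c))"
    unfolding is_pca_def by blast
  define K1 where "K1 a = the (\<psi> k a)" for a
  define S1 where "S1 a = the (\<psi> s a)" for a
  define S2 where "S2 a b = the (\<psi> (S1 a) b)" for a b
  have K1: "\<psi> k a = Some (K1 a)" "\<psi> (K1 a) b = Some a" for a b
    using hk[rule_format, of a b] unfolding K1_def app_def
    by (auto split: option.splits)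
  have S1: "\<psi> s a = Some (S1 a)" "\<psi> (S1 a) b = Some (S2 a b)" for a b
    using hs1[rule_format, of a b] unfolding S1_def S2_def app_def
    by (auto split: option.splits)
  have S2: "\<psi> (S2 a b) c = (case \<psi> a c of None \<Rightarrow> None | Some u \<Rightarrow>
       (case \<psi> b c of None \<Rightarrow> None | Some v \<Rightarrow> \<psi> u v))" for a b c
    using hs2[rule_format, of a b c] unfolding app_def by (simp add: S1 split: option.splits)
  define I where "I = S2 k k"
  have I: "\<psi> I x = Some x" for x
    unfolding I_def by (simp add: S2 K1)
  have rK: "realizes \<psi> k K1" unfolding realizes_def by (simp add: K1)
  have rC: "realizes \<psi> (K1 a) (\<lambda>_. a)" for a unfolding realizes_def by (simp add: K1)
  have rSS: "realizes \<psi> (S2 (S2 (K1 s) eF) eG) (\<lambda>w. S2 (F w) (G w))"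
    if "realizes \<psi> eF F" "realizes \<psi> eG G" for eF eG F G
    using that unfolding realizes_def by (simp add: S2 K1 S1)
  obtain c where c: "\<psi> c = (\<lambda>x. Some (Suc x))"
    using en suc_pc unfolding computable_enum_norep_def by blast
  define g where "g w = S2 (S2 (K1 c) (S2 (K1 w) (K1 w))) I" for w
  have g: "\<psi> (g w) x = (case \<psi> w w of None \<Rightarrow> None | Some v \<Rightarrow> \<psi> (Suc v) x)" for w x
    unfolding g_def by (simp add: S2 K1 I c split: option.splits)
  have "realizes \<psi> (S2 (S2 (K1 s) (S2 (S2 (K1 s) (K1 (K1 c))) (S2 (S2 (K1 s) k) k))) (K1 I)) g"
    unfolding g_def by (intro rSS rC rK)
  then obtain W where W: "\<psi> W w = Some (g w)" for w unfolding realizes_def by blast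
  define f where "f = g W"
  have eq: "\<psi> f = \<psi> (Suc f)"
    by (rule ext) (simp add: f_def g W)
  have "partial_computable1 (\<psi> f)" using en unfolding computable_enum_norep_def by blast
  then have "\<exists>!x. \<psi> x = \<psi> f" using en unfolding computable_enum_norep_def by blast
  then have "Suc f = f" using eq by metis
  then show False by simp
qed

end
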